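(* Let $N \ge 1$ agents $[N]=\{1,\dots,N\}$ be given with a distance function $\mathrm{dist}$ as in the context, let $n=\sum_{i=1}^N n_i$, and partition $n\times n$ matrices into $N\times N$ blocks accordingly. Fix $i\in[N]$. Let $L\in\mathbb{R}^{n\times n}$ be $(\tau,\rho)$-stable (with $\tau\ge 1$, $\rho>0$) and $(c_L,\gamma)$-SED with $c_L\ge 1$, $\gamma>0$, and let $M\in\mathbb{R}^{n\times n}$ be $(c_M,\gamma)$-SED away from $i$. Then the (unique) solution $P$ of the Lyapunov equation $P = L^\top P L + M$ is $(c_P,\gamma_P)$-SED away from $i$, where $$c_P = \frac{\|M\|\,\tau^2}{1-e^{-2\rho}} + 2c_M,\qquad \gamma_P = \frac{\rho\,\gamma}{\rho+\ln(N c_L)}.$$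
   Context: $\|\cdot\|$ denotes the Euclidean norm of vectors and the induced $\ell_2$ operator norm of matrices. There are $N$ agents $[N]=\{1,\dots,N\}$ embedded on an undirected graph; $\mathrm{dist}:[N]\times[N]\to\mathbb{R}_{\ge0}$ is the graph (shortest-path) distance, so $\mathrm{dist}(i,i)=0$, $\mathrm{dist}(i,j)=\mathrm{dist}(j,i)$, and $\mathrm{dist}(i,j)\le \mathrm{dist}(i,k)+\mathrm{dist}(k,j)$. Agent $i$ has dimensions $n_i$ (and $m_i$); a matrix $X\in\mathbb{R}^{\sum_i n_i\times\sum_i m_i}$ is partitioned into blocks $[X]_{lj}\in\mathbb{R}^{n_l\times m_j}$. Definition ($(\tau,\rho)$-stability): for $\tau\ge1,\rho>0$, a square matrix $X$ is $(\tau,\rho)$-stable if $\|X^k\|\le \tau e^{-\rho k}$ for all integers $k\ge0$. Definition (SED): the block matrix $X$ is $(c,\gamma)$-SED if $\|[X]_{lj}\|\le c\,e^{-\gamma\,\mathrm{dist}(l,j)}$ for all $l,j\in[N]$. Definition (SED away from $i$): for $i\in[N]$, the block matrix $X$ is $(c,\gamma)$-SED away from $i$ if $\|[X]_{lj}\|\le c\,e^{-\gamma\max(\mathrm{dist}(i,l),\mathrm{dist}(i,j))}$ for all $l,j\in[N]$. *)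

theory Defs
  imports "HOL-Analysis.Analysis"
begin

text \<open>Matrices are real n x n matrices indexed by a finite type 'n (n = CARD('n) = sum of n_i).
  The coordinate-to-agent assignment ag :: 'n => nat encodes the block partition:
  coordinate r belongs to agent ag r in {1..N}.\<close>

definition opnorm :: "real^'n^'m \<Rightarrow> real" where
  "opnorm X = onorm (\<lambda>v. X *v v)"

fun mpow :: "real^'n^'n \<Rightarrow> nat \<Rightarrow> real^'n^'n" where
  "mpow X 0 = mat 1"
| "mpow X (Suc k) = X ** mpow X k"

text \<open>Block (l,j) of X, zero-padded (zero padding does not change the operator norm).\<close>
definition blk :: "('n \<Rightarrow> nat) \<Rightarrow> real^'n^'n \<Rightarrow> nat \<Rightarrow> nat \<Rightarrow> real^'n^'n" where
  "blk ag X l j = (\<chi> r c. if ag r = l \<and> ag c = j then X $ r $ c else 0)"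

definition blknorm :: "('n \<Rightarrow> nat) \<Rightarrow> real^'n^'n \<Rightarrow> nat \<Rightarrow> nat \<Rightarrow> real" where
  "blknorm ag X l j = opnorm (blk ag X l j)"

definition walk :: "(nat \<Rightarrow> nat \<Rightarrow> bool) \<Rightarrow> nat \<Rightarrow> nat \<Rightarrow> nat \<Rightarrow> bool" where
  "walk E k a b = (\<exists>p::nat \<Rightarrow> nat. p 0 = a \<and> p k = b \<and> (\<forall>m<k. E (p m) (p (Suc m))))"

definition gdist :: "(nat \<Rightarrow> nat \<Rightarrow> bool) \<Rightarrow> nat \<Rightarrow> nat \<Rightarrow> real" where
  "gdist E a b = real (LEAST k. walk E k a b)"

definition conn_ugraph :: "nat \<Rightarrow> (nat \<Rightarrow> nat \<Rightarrow> bool) \<Rightarrow> bool" where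
  "conn_ugraph N E = ((\<forall>u v. E u v \<longrightarrow> u \<in> {1..N} \<and> v \<in> {1..N} \<and> E v u)
      \<and> (\<forall>a\<in>{1..N}. \<forall>b\<in>{1..N}. \<exists>k. walk E k a b))"

definition stable :: "real \<Rightarrow> real \<Rightarrow> real^'n^'n \<Rightarrow> bool" where
  "stable \<tau> \<rho> X = (\<forall>k::nat. opnorm (mpow X k) \<le> \<tau> * exp (- \<rho> * real k))"

definition SED :: "nat \<Rightarrow> (nat \<Rightarrow> nat \<Rightarrow> bool) \<Rightarrow> ('n \<Rightarrow> nat) \<Rightarrow> real \<Rightarrow> real \<Rightarrow> real^'n^'n \<Rightarrow> bool" where
  "SED N E ag c \<gamma> X = (\<forall>l\<in>{1..N}. \<forall>j\<in>{1..N}.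
      blknorm ag X l j \<le> c * exp (- \<gamma> * gdist E l j))"

definition SED_away :: "nat \<Rightarrow> (nat \<Rightarrow> nat \<Rightarrow> bool) \<Rightarrow> ('n \<Rightarrow> nat) \<Rightarrow> nat \<Rightarrow> real \<Rightarrow> real \<Rightarrow> real^'n^'n \<Rightarrow> bool" where
  "SED_away N E ag i c \<gamma> X = (\<forall>l\<in>{1..N}. \<forall>j\<in>{1..N}.
      blknorm ag X l j \<le> c * exp (- \<gamma> * max (gdist E i l) (gdist E i j)))"

end

theory Submission
  imports Defs
begin

lemma opnorm_bl: "bounded_linear (\<lambda>v. (X::real^'n^'m) *v v)"
  by (simp add: matrix_vector_mul_bounded_linear)

lemma opnorm_apply: "norm (X *v v) \<le> opnorm (X::real^'n^'m) * norm v"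
  unfolding opnorm_def by (rule onorm[OF opnorm_bl])

lemma opnorm_nonneg: "0 \<le> opnorm (X::real^'n^'m)"
  unfolding opnorm_def by (rule onorm_pos_le[OF opnorm_bl])

lemma opnorm_le: assumes "\<And>v. norm (X *v v) \<le> b * norm v" shows "opnorm (X::real^'n^'m) \<le> b"
  unfolding opnorm_def by (rule onorm_le) (use assms in auto)

lemma opnorm_mult: "opnorm ((A::real^'n^'m) ** (B::real^'k^'n)) \<le> opnorm A * opnorm B"
proof (rule opnorm_le)
  fix v
  have "norm ((A ** B) *v v) = norm (A *v (B *v v))" by (simp add: matrix_vector_mul_assoc)
  also have "\<dots> \<le> opnorm A * norm (B *v v)" by (rule opnorm_apply)
  also have "\<dots> \<le> opnorm A * (opnorm B * norm v)"
    by (rule mult_left_mono[OF opnorm_apply opnorm_nonneg])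
  finally show "norm ((A ** B) *v v) \<le> opnorm A * opnorm B * norm v" by (simp add: mult.assoc)
qed

lemma opnorm_add: "opnorm ((A::real^'n^'m) + B) \<le> opnorm A + opnorm B"
proof (rule opnorm_le)
  fix v
  have "norm ((A + B) *v v) = norm (A *v v + B *v v)" by (simp add: matrix_vector_mult_add_rdistrib)
  also have "\<dots> \<le> norm (A *v v) + norm (B *v v)" by (rule norm_triangle_ineq)
  also have "\<dots> \<le> opnorm A * norm v + opnorm B * norm v" by (intro add_mono opnorm_apply)
  finally show "norm ((A + B) *v v) \<le> (opnorm A + opnorm B) * norm v" by (simp add: algebra_simps)
qed

lemma opnorm_zero: "opnorm (0::real^'n^'m) = 0"
  by (metis opnorm_le opnorm_nonneg matrix_vector_mult_0 norm_zero mult_zero_left order_antisym order_refl)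

lemma opnorm_sum: "finite S \<Longrightarrow> opnorm (\<Sum>k\<in>S. (f k::real^'n^'m)) \<le> (\<Sum>k\<in>S. opnorm (f k))"
proof (induction S rule: finite_induct)
  case empty then show ?case by (simp add: opnorm_zero)
next
  case (insert x F)
  then show ?case using opnorm_add[of "f x" "sum f F"] by simp
qed

lemma opnorm_id: "opnorm (mat 1 :: real^'n^'n) \<le> 1"
  by (rule opnorm_le) simp

lemma opnorm_transpose_le: "opnorm (transpose (A::real^'n^'m)) \<le> opnorm A"
proof (rule opnorm_le)
  fix v :: "real^'m"
  let ?w = "transpose A *v v"
  have "norm ?w ^ 2 = ?w \<bullet> ?w" by (simp add: power2_norm_eq_inner)
  also have "\<dots> = (A *v ?w) \<bullet> v"
    using adjoint_works[OF matrix_vector_mul_linear[of A], of ?w v] adjoint_matrix[of A] by simp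
  also have "\<dots> \<le> norm (A *v ?w) * norm v" by (rule Cauchy_Schwarz_ineq2[THEN order_trans[OF abs_ge_self]])
  also have "\<dots> \<le> opnorm A * norm ?w * norm v" by (intro mult_right_mono opnorm_apply) simp
  finally have h: "norm ?w * norm ?w \<le> norm ?w * (opnorm A * norm v)" by (simp add: power2_eq_square algebra_simps)
  show "norm ?w \<le> opnorm A * norm v"
  proof (cases "norm ?w = 0")
    case True then show ?thesis using opnorm_nonneg[of A] by simp
  next
    case False then show ?thesis using h by (simp add: mult_le_cancel_left)
  qed
qed

lemma opnorm_transpose: "opnorm (transpose (A::real^'n^'m)) = opnorm A"
  using opnorm_transpose_le[of A] opnorm_transpose_le[of "transpose A"] by simp

lemma blk_apply: "blk ag X l j *v v = (\<chi> r. if ag r = l then (X *v (\<chi> c. if ag c = j then v$c else 0))$r else 0)"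
  by (auto simp add: blk_def vec_eq_iff matrix_vector_mult_def intro!: sum.cong)

lemma opnorm_blk: "blknorm (ag::'a::finite\<Rightarrow>nat) X l j \<le> opnorm X"
  unfolding blknorm_def
proof (rule opnorm_le)
  fix v :: "real^'a"
  let ?u = "(\<chi> c. if ag c = j then v$c else 0) :: real^'a"
  have "norm (blk ag X l j *v v) \<le> norm (X *v ?u)"
    unfolding blk_apply by (rule norm_le_componentwise_cart) auto
  also have "\<dots> \<le> opnorm X * norm ?u" by (rule opnorm_apply)
  also have "norm ?u \<le> norm v" by (rule norm_le_componentwise_cart) auto
  finally show "norm (blk ag X l j *v v) \<le> opnorm X * norm v"
    using opnorm_nonneg[of X] by (simp add: mult_left_mono order_trans)
qed


lemma blk_mult:
  assumes "\<forall>r. ag r \<in> {1..N}"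
  shows "blk ag (X ** Y) l j = (\<Sum>a\<in>{1..N}. blk ag X l a ** blk ag Y a j)"
proof -
  have "\<And>r c. (X ** Y)$r$c = (\<Sum>a\<in>{1..N}. \<Sum>s\<in>UNIV. (if ag s = a then X$r$s * Y$s$c else 0))"
  proof -
    fix r c
    have "(\<Sum>a\<in>{1..N}. \<Sum>s\<in>UNIV. (if ag s = a then X$r$s * Y$s$c else 0))
        = (\<Sum>s\<in>UNIV. \<Sum>a\<in>{1..N}. (if ag s = a then X$r$s * Y$s$c else 0))"
      by (rule sum.swap)
    also have "\<dots> = (\<Sum>s\<in>UNIV. X$r$s * Y$s$c)"
      using assms by (simp add: sum.delta)
    finally show "(X ** Y)$r$c = (\<Sum>a\<in>{1..N}. \<Sum>s\<in>UNIV. (if ag s = a then X$r$s * Y$s$c else 0))"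
      by (simp add: matrix_matrix_mult_def)
  qed
  then show ?thesis
    by (auto simp: vec_eq_iff blk_def matrix_matrix_mult_def sum_component intro!: sum.cong)
qed

lemma blk_add: "blk ag (X + Y) l j = blk ag X l j + blk ag Y l j"
  by (simp add: blk_def vec_eq_iff)

lemma blk_zero: "blk ag 0 l j = 0"
  by (simp add: blk_def vec_eq_iff)

lemma blk_sum: "finite S \<Longrightarrow> blk ag (\<Sum>k\<in>S. f k) l j = (\<Sum>k\<in>S. blk ag (f k) l j)"
  by (induction S rule: finite_induct) (simp_all add: blk_add blk_zero)

lemma blk_transpose: "blk ag (transpose X) l j = transpose (blk ag X j l)"
  by (simp add: blk_def vec_eq_iff transpose_def)

lemma blknorm_transpose: "blknorm ag (transpose X) l j = blknorm ag X j l"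
  by (simp add: blknorm_def blk_transpose opnorm_transpose)

lemma blknorm_nonneg: "0 \<le> blknorm ag X l j"
  by (simp add: blknorm_def opnorm_nonneg)

lemma blk_mat1: "a \<noteq> b \<Longrightarrow> blk ag (mat 1) a b = 0"
  by (auto simp add: blk_def vec_eq_iff mat_def)

lemma walk_refl: "walk E 0 a a"
  unfolding walk_def by (rule exI[of _ "\<lambda>_. a"]) simp

lemma walk_append:
  assumes "walk E k1 a c" "walk E k2 c b" shows "walk E (k1 + k2) a b"
proof -
  obtain p where p: "p 0 = a" "p k1 = c" "\<forall>m<k1. E (p m) (p (Suc m))" using assms(1) walk_def by metis
  obtain q where q: "q 0 = c" "q k2 = b" "\<forall>m<k2. E (q m) (q (Suc m))" using assms(2) walk_def by metis
  define r where "r m = (if m \<le> k1 then p m else q (m - k1))" for m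
  have "r 0 = a" "r (k1+k2) = b" using p q by (auto simp: r_def)
  moreover have "\<forall>m<k1+k2. E (r m) (r (Suc m))"
  proof (intro allI impI)
    fix m assume m: "m < k1 + k2"
    show "E (r m) (r (Suc m))"
    proof (cases "m < k1")
      case True then show ?thesis using p by (auto simp: r_def)
    next
      case False
      then have "Suc m - k1 = Suc (m - k1)" by simp
      then show ?thesis using False m q p by (auto simp: r_def)
    qed
  qed
  ultimately show ?thesis unfolding walk_def by blast
qed

lemma walk_rev:
  assumes sym: "\<And>u v. E u v \<Longrightarrow> E v u" and "walk E k a b" shows "walk E k b a"
proof -
  obtain p where p: "p 0 = a" "p k = b" "\<forall>m<k. E (p m) (p (Suc m))" using assms(2) walk_def by metis
  define r where "r m = p (k - m)" for m
  have "\<forall>m<k. E (r m) (r (Suc m))"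
  proof (intro allI impI)
    fix m assume m: "m < k"
    have "E (p (k - Suc m)) (p (Suc (k - Suc m)))" using p m by auto
    moreover have "Suc (k - Suc m) = k - m" using m by simp
    ultimately show "E (r m) (r (Suc m))" using sym by (auto simp: r_def)
  qed
  then show ?thesis unfolding walk_def using p by (intro exI[of _ r]) (auto simp: r_def)
qed

lemma gdist_le: "walk E k a b \<Longrightarrow> gdist E a b \<le> real k"
  unfolding gdist_def by (simp add: Least_le)

lemma gdist_walk: "\<exists>k. walk E k a b \<Longrightarrow> walk E (LEAST k. walk E k a b) a b"
  by (rule LeastI_ex)

lemma gdist_self: "gdist E a a = 0"
  using gdist_le[OF walk_refl, of E a] unfolding gdist_def by simp

lemma gdist_nonneg: "0 \<le> gdist E a b"
  unfolding gdist_def by simp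

lemma gdist_tri:
  assumes "conn_ugraph N E" "a \<in> {1..N}" "b \<in> {1..N}" "c \<in> {1..N}"
  shows "gdist E a b \<le> gdist E a c + gdist E c b"
proof -
  have w1: "walk E (LEAST k. walk E k a c) a c" using assms by (intro gdist_walk) (auto simp: conn_ugraph_def)
  have w2: "walk E (LEAST k. walk E k c b) c b" using assms by (intro gdist_walk) (auto simp: conn_ugraph_def)
  show ?thesis using gdist_le[OF walk_append[OF w1 w2]] by (simp add: gdist_def)
qed

lemma gdist_sym:
  assumes "conn_ugraph N E" "a \<in> {1..N}" "b \<in> {1..N}"
  shows "gdist E a b = gdist E b a"
proof -
  have sym: "\<And>u v. E u v \<Longrightarrow> E v u" using assms(1) by (auto simp: conn_ugraph_def)
  have w1: "walk E (LEAST k. walk E k a b) a b" using assms by (intro gdist_walk) (auto simp: conn_ugraph_def)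
  have w2: "walk E (LEAST k. walk E k b a) b a" using assms by (intro gdist_walk) (auto simp: conn_ugraph_def)
  show ?thesis using gdist_le[OF walk_rev[OF sym w1]] gdist_le[OF walk_rev[OF sym w2]]
    by (simp add: gdist_def)
qed

lemma mpow_Suc': "mpow X (Suc k) = mpow X k ** X"
  by (induction k) (simp_all add: matrix_mul_assoc)

lemma transpose_mpow_Suc: "transpose (mpow X (Suc k)) = transpose (mpow X k) ** transpose X"
  by (simp add: matrix_transpose_mul)


lemma matrix_add_rdistrib': "((A::real^'n^'m) + B) ** C = A ** C + B ** C"
  by (simp add: vec_eq_iff matrix_matrix_mult_def sum.distrib distrib_right)

lemma matrix_sub_ldistrib': "(A::real^'n^'m) ** (B - C) = A ** B - A ** C"
  by (simp add: vec_eq_iff matrix_matrix_mult_def sum_subtractf right_diff_distrib)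

lemma matrix_sub_rdistrib': "((A::real^'n^'m) - B) ** C = A ** C - B ** C"
  by (simp add: vec_eq_iff matrix_matrix_mult_def sum_subtractf left_diff_distrib)

lemma matrix_scaleR_left': "(c *\<^sub>R (A::real^'n^'m)) ** B = c *\<^sub>R (A ** B)"
  by (simp add: vec_eq_iff matrix_matrix_mult_def sum_distrib_left mult.assoc)

lemma matrix_scaleR_right': "(A::real^'n^'m) ** (c *\<^sub>R B) = c *\<^sub>R (A ** B)"
  by (simp add: vec_eq_iff matrix_matrix_mult_def sum_distrib_left algebra_simps)

lemma exp_pow: "exp (- r * real k) = exp (- r) ^ k"
  by (metis exp_of_nat_mult mult.commute mult_minus_left)

lemma opnorm_mpow_sq:
  assumes "stable \<tau> \<rho> L" "\<tau> \<ge> 1"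
  shows "opnorm (transpose (mpow L k) ** X ** mpow L k) \<le> \<tau>^2 * exp (-2*\<rho>) ^ k * opnorm X"
proof -
  have a: "opnorm (mpow L k) \<le> \<tau> * exp (-\<rho>) ^ k" using assms unfolding stable_def by (metis exp_pow)
  have "opnorm (transpose (mpow L k) ** X ** mpow L k) \<le> opnorm (transpose (mpow L k) ** X) * opnorm (mpow L k)"
    by (rule opnorm_mult)
  also have "\<dots> \<le> opnorm (mpow L k) * opnorm X * opnorm (mpow L k)"
    by (intro mult_right_mono opnorm_nonneg) (metis opnorm_mult opnorm_transpose)
  also have "\<dots> = opnorm (mpow L k)^2 * opnorm X" by (simp add: power2_eq_square)
  also have "\<dots> \<le> (\<tau> * exp (-\<rho>) ^ k)^2 * opnorm X"
    by (intro mult_right_mono power_mono a opnorm_nonneg)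
  also have "(\<tau> * exp (-\<rho>) ^ k)^2 = \<tau>^2 * exp (-2*\<rho>) ^ k"
  proof -
    have "exp (-2*\<rho>) = exp (-\<rho>)^2" by (simp add: power2_eq_square exp_add[symmetric])
    then show ?thesis by (simp add: power_mult_distrib power_mult[symmetric] mult.commute)
  qed
  finally show ?thesis .
qed

lemma iter_eq:
  assumes "D = transpose L ** D ** L"
  shows "D = transpose (mpow L k) ** D ** mpow L k"
proof (induction k)
  case 0 then show ?case by simp
next
  case (Suc k)
  have "transpose (mpow L (Suc k)) ** D ** mpow L (Suc k)
      = transpose (mpow L k) ** (transpose L ** D ** L) ** mpow L k"
    unfolding transpose_mpow_Suc by (simp only: mpow.simps matrix_mul_assoc)
  then show ?case using Suc assms by simp
qed

lemma decomp:
  assumes "P = transpose L ** P ** L + M"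
  shows "P = (\<Sum>k<K. transpose (mpow L k) ** M ** mpow L k) + transpose (mpow L K) ** P ** mpow L K"
proof (induction K)
  case 0 then show ?case by simp
next
  case (Suc K)
  have "transpose (mpow L K) ** P ** mpow L K
      = transpose (mpow L K) ** (transpose L ** P ** L + M) ** mpow L K"
    using assms by simp
  also have "\<dots> = transpose (mpow L (Suc K)) ** P ** mpow L (Suc K) + transpose (mpow L K) ** M ** mpow L K"
    unfolding transpose_mpow_Suc by (simp only: mpow.simps matrix_mul_assoc matrix_add_ldistrib matrix_add_rdistrib')
  finally show ?case using Suc by (simp add: algebra_simps)
qed

lemma small_pow:
  fixes \<rho> \<tau> \<delta> :: real
  assumes "\<rho> > 0" "\<tau> \<ge> 1" "\<delta> > 0"
  shows "\<exists>k. \<tau>^2 * exp (-2*\<rho>) ^ k < \<delta>"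
proof -
  have "exp (-2*\<rho>) < 1" using assms by simp
  moreover have "\<delta>/\<tau>^2 > 0" using assms by simp
  ultimately obtain k where "exp (-2*\<rho>) ^ k < \<delta> / \<tau>^2" using real_arch_pow_inv[of "\<delta>/\<tau>^2" "exp (-2*\<rho>)"] by auto
  then have "\<tau>^2 * exp (-2*\<rho>) ^ k < \<delta>" using assms by (simp add: field_simps)
  then show ?thesis by blast
qed

lemma unique0:
  assumes "D = transpose L ** D ** L" "stable \<tau> \<rho> L" "\<tau> \<ge> 1" "\<rho> > 0"
  shows "D = 0"
proof -
  obtain k where k: "\<tau>^2 * exp (-2*\<rho>) ^ k < 1" using small_pow[OF assms(4,3), of 1] by auto
  have "opnorm D \<le> \<tau>^2 * exp (-2*\<rho>) ^ k * opnorm D"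
    using opnorm_mpow_sq[OF assms(2,3), of k D] iter_eq[OF assms(1), of k] by simp
  then have "opnorm D \<le> 0" using k opnorm_nonneg[of D]
    by (metis mult_le_cancel_right1 not_le order_le_less)
  then have "\<And>v. D *v v = 0" using opnorm_apply[of D] opnorm_nonneg[of D]
    by (metis antisym mult_zero_left norm_le_zero_iff)
  then show ?thesis by (simp add: matrix_eq)
qed

lemma exists_unique_sol:
  fixes L M :: "real^'n^'n"
  assumes "stable \<tau> \<rho> L" "\<tau> \<ge> 1" "\<rho> > 0"
  shows "\<exists>!P. P = transpose L ** P ** L + M"
proof -
  define f where "f P = P - transpose L ** P ** L" for P :: "real^'n^'n"
  have lin: "linear f"
    by (rule linearI) (simp_all add: f_def matrix_add_ldistrib matrix_add_rdistrib' matrix_scaleR_left' matrix_scaleR_right' scaleR_diff_right)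
  have "inj f"
  proof (rule injI)
    fix x y assume "f x = f y"
    then have h: "x - transpose L ** x ** L = y - transpose L ** y ** L" by (simp add: f_def)
    have "x - y = (x - transpose L ** x ** L) - (y - transpose L ** y ** L) + (transpose L ** x ** L - transpose L ** y ** L)"
      by (simp add: algebra_simps)
    also have "\<dots> = transpose L ** x ** L - transpose L ** y ** L" using h by simp
    also have "\<dots> = transpose L ** (x - y) ** L" by (simp add: matrix_sub_ldistrib' matrix_sub_rdistrib')
    finally have "x - y = transpose L ** (x - y) ** L" .
    then show "x = y" using unique0[OF _ assms] by (metis eq_iff_diff_eq_0)
  qed
  then have "surj f" using lin linear_injective_imp_surjective by blast
  then obtain P where "f P = M" by (metis surjD)
  then have ex: "P = transpose L ** P ** L + M" by (simp add: f_def algebra_simps)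
  show ?thesis
  proof (rule ex1I[of _ P])
    show "P = transpose L ** P ** L + M" by (fact ex)
    fix Q assume "Q = transpose L ** Q ** L + M"
    then have "f Q = M" unfolding f_def diff_eq_eq by (simp add: add.commute)
    then have "f Q = f P" using \<open>f P = M\<close> by simp
    then show "Q = P" using \<open>inj f\<close> by (simp add: inj_eq)
  qed
qed


lemma exp_tri:
  assumes "\<gamma> > 0" "(d::real) \<le> d1 + d2"
  shows "exp (-\<gamma> * d1) * exp (-\<gamma> * d2) \<le> exp (-\<gamma> * d)"
proof -
  have "\<gamma>*d \<le> \<gamma>*(d1+d2)" using assms by (intro mult_left_mono) auto
  then show ?thesis by (simp add: exp_add[symmetric] algebra_simps)
qed

lemma pow_sed:
  assumes conn: "conn_ugraph N E" and ag: "\<forall>r. ag r \<in> {1..N}"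
    and sed: "SED N E ag cL \<gamma> L" and cL: "cL \<ge> 0" and g: "\<gamma> > 0"
  shows "\<forall>a\<in>{1..N}. \<forall>b\<in>{1..N}. blknorm ag (mpow L (Suc m)) a b \<le> cL^(Suc m) * real N^m * exp (-\<gamma> * gdist E a b)"
proof (induction m)
  case 0 then show ?case using sed by (simp add: SED_def)
next
  case (Suc m)
  let ?C = "cL^(Suc m) * real N^m"
  have C0: "?C \<ge> 0" using cL by simp
  show ?case
  proof (intro ballI)
    fix a b assume a: "a \<in> {1..N}" and b: "b \<in> {1..N}"
    have "blknorm ag (mpow L (Suc (Suc m))) a b = opnorm (\<Sum>c\<in>{1..N}. blk ag L a c ** blk ag (mpow L (Suc m)) c b)"
      unfolding blknorm_def using blk_mult[OF ag] by (simp only: mpow.simps(2))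
    also have "\<dots> \<le> (\<Sum>c\<in>{1..N}. opnorm (blk ag L a c ** blk ag (mpow L (Suc m)) c b))"
      by (rule opnorm_sum) simp
    also have "\<dots> \<le> (\<Sum>c\<in>{1..N}. cL * ?C * exp (-\<gamma> * gdist E a b))"
    proof (rule sum_mono)
      fix c assume c: "c \<in> {1..N}"
      have "opnorm (blk ag L a c ** blk ag (mpow L (Suc m)) c b) \<le> blknorm ag L a c * blknorm ag (mpow L (Suc m)) c b"
        unfolding blknorm_def by (rule opnorm_mult)
      also have "\<dots> \<le> (cL * exp (-\<gamma> * gdist E a c)) * (?C * exp (-\<gamma> * gdist E c b))"
        using sed Suc.IH a b c cL by (intro mult_mono blknorm_nonneg) (auto simp: SED_def)
      also have "\<dots> = cL * ?C * (exp (-\<gamma> * gdist E a c) * exp (-\<gamma> * gdist E c b))" by simp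
      also have "\<dots> \<le> cL * ?C * exp (-\<gamma> * gdist E a b)"
        using cL C0 by (intro mult_left_mono exp_tri g gdist_tri[OF conn a b c]) simp_all
      finally show "opnorm (blk ag L a c ** blk ag (mpow L (Suc m)) c b) \<le> cL * ?C * exp (-\<gamma> * gdist E a b)" .
    qed
    also have "\<dots> = cL^(Suc (Suc m)) * real N^(Suc m) * exp (-\<gamma> * gdist E a b)" by simp
    finally show "blknorm ag (mpow L (Suc (Suc m))) a b \<le> cL^(Suc (Suc m)) * real N^(Suc m) * exp (-\<gamma> * gdist E a b)" .
  qed
qed

lemma term_blk:
  assumes conn: "conn_ugraph N E" and ag: "\<forall>r. ag r \<in> {1..N}"
    and sed: "SED N E ag cL \<gamma> L" and cL: "cL \<ge> 0" and g: "\<gamma> > 0"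
    and sedM: "SED_away N E ag i cM \<gamma> M" and cM: "cM \<ge> 0" and i: "i \<in> {1..N}"
    and l: "l \<in> {1..N}" and j: "j \<in> {1..N}"
  shows "blknorm ag (transpose (mpow L k) ** M ** mpow L k) l j
     \<le> (real N * cL)^(2*k) * cM * exp (-\<gamma> * max (gdist E i l) (gdist E i j))"
proof (cases k)
  case 0 then show ?thesis using sedM l j by (simp add: SED_away_def)
next
  case (Suc m)
  let ?Lk = "mpow L k"
  let ?T = "transpose ?Lk"
  let ?C = "cL^(Suc m) * real N^m"
  let ?e = "exp (-\<gamma> * max (gdist E i l) (gdist E i j))"
  have C0: "?C \<ge> 0" using cL by simp
  have PS: "\<forall>a\<in>{1..N}. \<forall>b\<in>{1..N}. blknorm ag ?Lk a b \<le> ?C * exp (-\<gamma> * gdist E a b)"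
    using pow_sed[OF conn ag sed cL g, of m] Suc by simp
  have "blk ag (?T ** M ** ?Lk) l j = (\<Sum>b\<in>{1..N}. (\<Sum>a\<in>{1..N}. blk ag ?T l a ** blk ag M a b) ** blk ag ?Lk b j)"
    by (simp add: blk_mult[OF ag])
  then have "blknorm ag (?T ** M ** ?Lk) l j \<le> (\<Sum>b\<in>{1..N}. opnorm ((\<Sum>a\<in>{1..N}. blk ag ?T l a ** blk ag M a b) ** blk ag ?Lk b j))"
    unfolding blknorm_def by (simp add: opnorm_sum)
  also have "\<dots> \<le> (\<Sum>b\<in>{1..N}. \<Sum>a\<in>{1..N}. ?C * cM * ?C * ?e)"
  proof (rule sum_mono)
    fix b assume b: "b \<in> {1..N}"
    have "opnorm ((\<Sum>a\<in>{1..N}. blk ag ?T l a ** blk ag M a b) ** blk ag ?Lk b j)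
        \<le> opnorm (\<Sum>a\<in>{1..N}. blk ag ?T l a ** blk ag M a b) * blknorm ag ?Lk b j"
      unfolding blknorm_def by (rule opnorm_mult)
    also have "\<dots> \<le> (\<Sum>a\<in>{1..N}. blknorm ag ?T l a * blknorm ag M a b) * blknorm ag ?Lk b j"
    proof (rule mult_right_mono[OF _ blknorm_nonneg])
      have "opnorm (\<Sum>a\<in>{1..N}. blk ag ?T l a ** blk ag M a b) \<le> (\<Sum>a\<in>{1..N}. opnorm (blk ag ?T l a ** blk ag M a b))"
        by (rule opnorm_sum) simp
      also have "\<dots> \<le> (\<Sum>a\<in>{1..N}. blknorm ag ?T l a * blknorm ag M a b)"
        unfolding blknorm_def by (intro sum_mono opnorm_mult)
      finally show "opnorm (\<Sum>a\<in>{1..N}. blk ag ?T l a ** blk ag M a b) \<le> (\<Sum>a\<in>{1..N}. blknorm ag ?T l a * blknorm ag M a b)" .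
    qed
    also have "\<dots> = (\<Sum>a\<in>{1..N}. blknorm ag ?T l a * blknorm ag M a b * blknorm ag ?Lk b j)"
      by (simp add: sum_distrib_right)
    also have "\<dots> \<le> (\<Sum>a\<in>{1..N}. ?C * cM * ?C * ?e)"
    proof (rule sum_mono)
      fix a assume a: "a \<in> {1..N}"
      let ?dal = "gdist E a l" and ?mab = "max (gdist E i a) (gdist E i b)" and ?dbj = "gdist E b j"
      have "blknorm ag ?T l a * blknorm ag M a b * blknorm ag ?Lk b j
          \<le> (?C * exp (-\<gamma> * ?dal)) * (cM * exp (-\<gamma> * ?mab)) * (?C * exp (-\<gamma> * ?dbj))"
        using PS sedM a b l j unfolding blknorm_transpose
        by (intro mult_mono blknorm_nonneg mult_nonneg_nonneg C0 cM) (auto simp: SED_away_def cL)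
      also have "\<dots> = ?C * cM * ?C * exp (-\<gamma> * (?dal + ?mab + ?dbj))"
        by (simp add: exp_add[symmetric] algebra_simps)
      also have "\<dots> \<le> ?C * cM * ?C * ?e"
      proof (rule mult_left_mono)
        have "gdist E i l \<le> gdist E i a + gdist E a l" by (rule gdist_tri[OF conn i l a])
        moreover have "gdist E i j \<le> gdist E i b + gdist E b j" by (rule gdist_tri[OF conn i j b])
        moreover have "0 \<le> ?dal" "0 \<le> ?dbj" by (simp_all add: gdist_nonneg)
        ultimately have "max (gdist E i l) (gdist E i j) \<le> ?dal + ?mab + ?dbj" by linarith
        then show "exp (-\<gamma> * (?dal + ?mab + ?dbj)) \<le> ?e" using g by simp
      qed (use C0 cM in simp)
      finally show "blknorm ag ?T l a * blknorm ag M a b * blknorm ag ?Lk b j \<le> ?C * cM * ?C * ?e" .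
    qed
    finally show "opnorm ((\<Sum>a\<in>{1..N}. blk ag ?T l a ** blk ag M a b) ** blk ag ?Lk b j) \<le> (\<Sum>a\<in>{1..N}. ?C * cM * ?C * ?e)" .
  qed
  also have "\<dots> = real N * real N * (?C * cM * ?C * ?e)" by simp
  also have "\<dots> = (real N * cL)^(2*k) * cM * ?e"
    using Suc by (simp add: power_mult_distrib power_mult power2_eq_square algebra_simps)
  finally show ?thesis .
qed


lemma head_geo:
  fixes y :: real
  assumes "y \<ge> 2 \<or> K = 0"
  shows "(\<Sum>k<Suc K. y^k) \<le> 2 * y^K"
proof (cases "K = 0")
  case True then show ?thesis by simp
next
  case False
  then have y: "y \<ge> 2" using assms by simp
  show ?thesis
  proof (induction K)
    case 0 then show ?case by simp
  next
    case (Suc K)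
    have "2 * y^K \<le> y * y^K" using y by (intro mult_right_mono) auto
    then show ?case using Suc by simp
  qed
qed

lemma tail_geo_eq:
  fixes q :: real
  shows "(1 - q) * (\<Sum>k\<in>{m..<m+j}. q^k) = q^m - q^(m+j)"
proof (induction j)
  case 0 then show ?case by simp
next
  case (Suc j)
  have "{m..<m + Suc j} = insert (m+j) {m..<m+j}" by auto
  then have "(\<Sum>k\<in>{m..<m+Suc j}. q^k) = q^(m+j) + (\<Sum>k\<in>{m..<m+j}. q^k)" by simp
  then have "(1 - q) * (\<Sum>k\<in>{m..<m+Suc j}. q^k) = (1-q)*q^(m+j) + (1 - q) * (\<Sum>k\<in>{m..<m+j}. q^k)"
    by (simp add: distrib_left)
  also have "\<dots> = (1-q)*q^(m+j) + (q^m - q^(m+j))" by (simp only: Suc)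
  also have "\<dots> = q^m - q^(m + Suc j)" by (simp add: algebra_simps)
  finally show ?case .
qed

lemma tail_geo:
  fixes q :: real
  assumes "0 \<le> q" "q < 1"
  shows "(\<Sum>k\<in>{m..<n}. q^k) \<le> q^m / (1 - q)"
proof (cases "m \<le> n")
  case False then show ?thesis using assms by simp
next
  case True
  then obtain j where n: "n = m + j" using le_Suc_ex by blast
  have "(1 - q) * (\<Sum>k\<in>{m..<n}. q^k) \<le> q^m" using tail_geo_eq[of q m j] n assms by simp
  then show ?thesis using assms by (simp add: field_simps)
qed

lemma final_bound:
  fixes t :: "nat \<Rightarrow> real" and x D \<gamma> \<rho> cM Am :: real
  assumes g: "\<gamma> > 0" and r: "\<rho> > 0" and x: "x \<ge> 1" and x2: "x \<ge> 2 \<or> D = 0" and D: "D \<ge> 0"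
    and cM: "cM \<ge> 0" and Am: "Am \<ge> 0"
    and t0: "\<forall>k. t k \<ge> 0"
    and t1: "\<forall>k. t k \<le> x^(2*k) * cM * exp (-\<gamma>*D)"
    and t2: "\<forall>k. t k \<le> Am * exp (-2*\<rho>)^k"
  shows "(\<Sum>k<K'. t k) \<le> (Am / (1 - exp (-2*\<rho>)) + 2*cM) * exp (- (\<rho>*\<gamma>/(\<rho> + ln x)) * D)"
proof -
  define a where "a = ln x"
  have a0: "a \<ge> 0" using x by (simp add: a_def)
  have ra: "\<rho> + a > 0" using a0 r by simp
  define Ks where "Ks = \<gamma>*D/(2*(\<rho>+a))"
  have Ks0: "Ks \<ge> 0" using g D ra by (simp add: Ks_def)
  define K where "K = nat \<lfloor>Ks\<rfloor>"
  have K1: "real K \<le> Ks" using Ks0 by (simp add: K_def)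
  have K2: "Ks < real K + 1" using Ks0 by (simp add: K_def)
  define q where "q = exp (-2*\<rho>)"
  have q0: "0 < q" "q < 1" using r by (simp_all add: q_def)
  define e where "e = exp (- (\<rho>*\<gamma>/(\<rho> + ln x)) * D)"
  have K0: "D = 0 \<Longrightarrow> K = 0" using K1 Ks0 by (simp add: Ks_def)
  have xpow: "x^(2*K) = exp (real (2*K) * a)"
  proof -
    have "exp (real (2*K) * a) = exp a ^ (2*K)" by (rule exp_of_nat_mult)
    also have "exp a = x" using x by (simp add: a_def)
    finally show ?thesis by (rule sym)
  qed
  have "x^(2*K) * exp (-\<gamma>*D) = exp (real (2*K) * a - \<gamma>*D)" unfolding xpow by (simp only: diff_conv_add_uminus exp_add mult_minus_left)
  also have "\<dots> \<le> exp (2*Ks*a - \<gamma>*D)" using K1 a0 by (simp add: mult_right_mono)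
  also have "2*Ks*a - \<gamma>*D = - (\<rho>*\<gamma>/(\<rho> + ln x)) * D"
    using ra by (simp add: Ks_def a_def[symmetric] field_simps)
  finally have hx: "x^(2*K) * exp (-\<gamma>*D) \<le> e" by (simp add: e_def)
  have head: "(\<Sum>k<Suc K. t k) \<le> 2 * cM * e"
  proof -
    have "(\<Sum>k<Suc K. t k) \<le> (\<Sum>k<Suc K. (x^2)^k * (cM * exp (-\<gamma>*D)))"
      using t1 by (intro sum_mono) (simp add: power_mult mult.assoc)
    also have "\<dots> = (\<Sum>k<Suc K. (x^2)^k) * (cM * exp (-\<gamma>*D))" by (rule sum_distrib_right[symmetric])
    also have "\<dots> \<le> (2 * (x^2)^K) * (cM * exp (-\<gamma>*D))"
    proof (intro mult_right_mono head_geo)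
      show "2 \<le> x\<^sup>2 \<or> K = 0"
      proof (cases "D = 0")
        case True then show ?thesis using K0 by simp
      next
        case False then have "x \<ge> 2" using x2 by simp
        then have "x*x \<ge> 2*1" by (intro mult_mono) auto
        then show ?thesis by (simp add: power2_eq_square)
      qed
    qed (use cM in simp)
    also have "\<dots> = 2 * cM * (x^(2*K) * exp (-\<gamma>*D))" by (simp add: power_mult)
    also have "\<dots> \<le> 2 * cM * e" using hx cM by (intro mult_left_mono) simp_all
    finally show ?thesis .
  qed
  have hq: "q^(Suc K) \<le> e"
  proof -
    have "q^(Suc K) = exp (real (Suc K) * (-2*\<rho>))" unfolding q_def by (rule exp_of_nat_mult[symmetric])
    also have "\<dots> \<le> exp (Ks * (-2*\<rho>))" using K2 r by (simp add: mult_le_cancel_right)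
    also have "Ks * (-2*\<rho>) = - (\<rho>*\<gamma>/(\<rho> + ln x)) * D"
      using ra by (simp add: Ks_def a_def[symmetric] field_simps)
    finally show ?thesis by (simp add: e_def)
  qed
  have tail: "(\<Sum>k\<in>{Suc K..<n}. t k) \<le> Am / (1 - q) * e" for n
  proof -
    have "(\<Sum>k\<in>{Suc K..<n}. t k) \<le> (\<Sum>k\<in>{Suc K..<n}. Am * q^k)"
      using t2 by (intro sum_mono) (simp add: q_def)
    also have "\<dots> = Am * (\<Sum>k\<in>{Suc K..<n}. q^k)" by (simp add: sum_distrib_left)
    also have "\<dots> \<le> Am * (q^(Suc K) / (1 - q))" using tail_geo[of q "Suc K" n] q0 Am by (intro mult_left_mono) simp_all
    also have "\<dots> \<le> Am * (e / (1 - q))" using hq q0 Am by (intro mult_left_mono divide_right_mono) simp_all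
    finally show ?thesis by simp
  qed
  define n where "n = max K' (Suc K)"
  have "(\<Sum>k<K'. t k) \<le> (\<Sum>k<n. t k)"
    using t0 by (intro sum_mono2) (auto simp: n_def)
  also have "(\<Sum>k<n. t k) = (\<Sum>k<Suc K. t k) + (\<Sum>k\<in>{Suc K..<n}. t k)"
  proof -
    have "Suc K \<le> n" by (simp add: n_def)
    then have "(\<Sum>k\<in>{0..<Suc K}. t k) + (\<Sum>k\<in>{Suc K..<n}. t k) = (\<Sum>k\<in>{0..<n}. t k)"
      by (intro sum.atLeastLessThan_concat) simp_all
    then show ?thesis by (simp only: atLeast0LessThan)
  qed
  also have "\<dots> \<le> 2 * cM * e + Am / (1 - q) * e" by (intro add_mono head tail)
  also have "\<dots> = (Am / (1 - exp (-2*\<rho>)) + 2*cM) * exp (- (\<rho>*\<gamma>/(\<rho> + ln x)) * D)"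
    by (simp add: e_def q_def algebra_simps)
  finally show ?thesis .
qed


theorem lemma1:
  fixes N :: nat and E :: "nat \<Rightarrow> nat \<Rightarrow> bool" and ag :: "'n::finite \<Rightarrow> nat"
    and i :: nat and L M :: "real^'n^'n" and \<tau> \<rho> cL cM \<gamma> :: real
  assumes "N \<ge> 1"
    and "conn_ugraph N E"
    and "\<forall>r. ag r \<in> {1..N}"
    and "i \<in> {1..N}"
    and "\<tau> \<ge> 1" and "\<rho> > 0"
    and "stable \<tau> \<rho> L"
    and "cL \<ge> 1" and "\<gamma> > 0"
    and "SED N E ag cL \<gamma> L"
    and "SED_away N E ag i cM \<gamma> M"
  shows "(\<exists>!P. P = transpose L ** P ** L + M) \<and>
    (\<forall>P. P = transpose L ** P ** L + M \<longrightarrow>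
       SED_away N E ag i
         (opnorm M * \<tau>^2 / (1 - exp (-2 * \<rho>)) + 2 * cM)
         (\<rho> * \<gamma> / (\<rho> + ln (real N * cL))) P)"
proof (intro conjI allI impI)
  note N1 = assms(1) and conn = assms(2) and ag = assms(3) and i = assms(4) and tau = assms(5)
    and rho = assms(6) and st = assms(7) and cL = assms(8) and g = assms(9) and sed = assms(10)
    and sedM = assms(11)
  show "\<exists>!P. P = transpose L ** P ** L + M" by (rule exists_unique_sol[OF st tau rho])
  fix P assume Peq: "P = transpose L ** P ** L + M"
  have cM: "cM \<ge> 0"
  proof -
    have "0 \<le> blknorm ag M i i" by (rule blknorm_nonneg)
    also have "\<dots> \<le> cM * exp (- \<gamma> * max (gdist E i i) (gdist E i i))" using sedM i unfolding SED_away_def by blast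
    finally show ?thesis by (simp add: zero_le_mult_iff)
  qed
  let ?x = "real N * cL"
  let ?tgt = "opnorm M * \<tau>^2 / (1 - exp (-2 * \<rho>)) + 2 * cM"
  let ?gP = "\<rho> * \<gamma> / (\<rho> + ln (real N * cL))"
  show "SED_away N E ag i ?tgt ?gP P"
    unfolding SED_away_def
  proof (intro ballI)
    fix l j assume l: "l \<in> {1..N}" and j: "j \<in> {1..N}"
    define D where "D = max (gdist E i l) (gdist E i j)"
    define t where "t k = blknorm ag (transpose (mpow L k) ** M ** mpow L k) l j" for k
    define B where "B = ?tgt * exp (- ?gP * D)"
    have x1: "?x \<ge> 1" using N1 cL by (metis mult_mono' of_nat_1 of_nat_le_iff mult_1_left order_trans zero_le_one)
    have x2: "?x \<ge> 2 \<or> D = 0"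
    proof (cases "N \<ge> 2")
      case True
      then have "real N * cL \<ge> 2 * 1" using cL by (intro mult_mono) auto
      then show ?thesis by simp
    next
      case False
      then have "N = 1" using N1 by simp
      then have "l = i" "j = i" using l j i by auto
      then show ?thesis by (simp add: D_def gdist_self)
    qed
    have D0: "D \<ge> 0" by (simp add: D_def gdist_nonneg le_max_iff_disj)
    have Am: "opnorm M * \<tau>^2 \<ge> 0" using opnorm_nonneg[of M] by simp
    have t0: "\<forall>k. t k \<ge> 0" by (simp add: t_def blknorm_nonneg)
    have t1: "\<forall>k. t k \<le> ?x^(2*k) * cM * exp (-\<gamma>*D)"
      using term_blk[OF conn ag sed _ g sedM cM i l j] cL by (simp add: t_def D_def)
    have t2: "\<forall>k. t k \<le> (opnorm M * \<tau>^2) * exp (-2*\<rho>)^k"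
    proof
      fix k
      have "t k \<le> opnorm (transpose (mpow L k) ** M ** mpow L k)" unfolding t_def by (rule opnorm_blk)
      also have "\<dots> \<le> \<tau>^2 * exp (-2*\<rho>) ^ k * opnorm M" by (rule opnorm_mpow_sq[OF st tau])
      finally show "t k \<le> (opnorm M * \<tau>^2) * exp (-2*\<rho>)^k" by (simp add: algebra_simps)
    qed
    have sumb: "(\<Sum>k<K'. t k) \<le> B" for K'
      using final_bound[OF g rho x1 x2 D0 cM Am t0 t1 t2, of K'] by (simp add: B_def)
    have bnd: "blknorm ag P l j \<le> B + \<tau>^2 * exp (-2*\<rho>) ^ K' * opnorm P" for K'
    proof -
      have "blk ag P l j = (\<Sum>k<K'. blk ag (transpose (mpow L k) ** M ** mpow L k) l j)
          + blk ag (transpose (mpow L K') ** P ** mpow L K') l j"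
      proof -
        have "blk ag P l j = blk ag ((\<Sum>k<K'. transpose (mpow L k) ** M ** mpow L k) + transpose (mpow L K') ** P ** mpow L K') l j"
          by (rule arg_cong[where f="\<lambda>X. blk ag X l j", OF decomp[OF Peq, of K']])
        also have "\<dots> = (\<Sum>k<K'. blk ag (transpose (mpow L k) ** M ** mpow L k) l j)
          + blk ag (transpose (mpow L K') ** P ** mpow L K') l j"
          by (simp only: blk_add blk_sum finite_lessThan)
        finally show ?thesis .
      qed
      note eqP = this
      have "blknorm ag P l j \<le> opnorm (\<Sum>k<K'. blk ag (transpose (mpow L k) ** M ** mpow L k) l j)
          + blknorm ag (transpose (mpow L K') ** P ** mpow L K') l j"
        unfolding blknorm_def eqP by (rule opnorm_add)
      also have "\<dots> \<le> (\<Sum>k<K'. t k) + opnorm (transpose (mpow L K') ** P ** mpow L K')"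
      proof (rule add_mono)
        have "opnorm (\<Sum>k<K'. blk ag (transpose (mpow L k) ** M ** mpow L k) l j)
            \<le> (\<Sum>k<K'. opnorm (blk ag (transpose (mpow L k) ** M ** mpow L k) l j))"
          by (rule opnorm_sum) simp
        also have "\<dots> = (\<Sum>k<K'. t k)" by (simp only: t_def blknorm_def)
        finally show "opnorm (\<Sum>k<K'. blk ag (transpose (mpow L k) ** M ** mpow L k) l j) \<le> (\<Sum>k<K'. t k)" .
      qed (rule opnorm_blk)
      also have "\<dots> \<le> B + \<tau>^2 * exp (-2*\<rho>) ^ K' * opnorm P"
        by (intro add_mono sumb opnorm_mpow_sq[OF st tau])
      finally show ?thesis .
    qed
    show "blknorm ag P l j \<le> ?tgt * exp (- ?gP * max (gdist E i l) (gdist E i j))"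
    proof (rule ccontr)
      assume "\<not> ?thesis"
      then have gt: "blknorm ag P l j > B" by (simp add: B_def D_def)
      define \<delta> where "\<delta> = (blknorm ag P l j - B) / (opnorm P + 1)"
      have op0: "opnorm P \<ge> 0" by (rule opnorm_nonneg)
      have "\<delta> > 0" using gt op0 by (simp add: \<delta>_def)
      then obtain K' where K': "\<tau>^2 * exp (-2*\<rho>) ^ K' < \<delta>" using small_pow[OF rho tau] by blast
      have "\<tau>^2 * exp (-2*\<rho>) ^ K' * opnorm P \<le> \<tau>^2 * exp (-2*\<rho>) ^ K' * (opnorm P + 1)"
        by (intro mult_left_mono) simp_all
      also have "\<dots> < \<delta> * (opnorm P + 1)" using K' op0 by (intro mult_strict_right_mono) simp_all
      also have "\<dots> = blknorm ag P l j - B" using op0 by (simp add: \<delta>_def)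
      finally show False using bnd[of K'] by simp
    qed
  qed
qed

end
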